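(* Let $n>k\ge1$ be coprime integers, $\eta$ in the upper half-plane, $\Lambda=\mathbb{Z}+\mathbb{Z}\eta$. For all $\tau\in\mathbb{C}\setminus\frac1n\Lambda$ and $z\in\mathbb{C}$, $$R_{n,k,\tau}(z)^{\bullet}=e(-n^2z)\,R_{n,n-k,-\tau}(-z),$$ where for $A\in\mathrm{End}(V\otimes V)$, $A^\bullet$ is the adjoint of $A$ with respect to the symmetric bilinear form on $V\otimes V$ with $\langle x_i\otimes x_k,x_j\otimes x_\ell\rangle=\delta_{ij}\delta_{k\ell}$, i.e. $\langle A^\bullet x,y\rangle=\langle x,Ay\rangle$ for all $x,y$.
   Context: Write $e(z)=e^{2\pi i z}$ and $\theta(z)=\sum_{m\in\mathbb{Z}}(-1)^m e\big(mz+\tfrac12 m(m-1)\eta\big)$. For $\alpha\in\mathbb{Z}$ put $\theta_\alpha(z)=e\big(\alpha z+\tfrac{\alpha}{2n}+\tfrac{\alpha(\alpha-n)}{2n}\eta\big)\prod_{m=0}^{n-1}\theta\big(z+\tfrac mn+\tfrac{\alpha}{n}\eta\big)$, regarded as indexed by $\alpha\in\mathbb{Z}_n$. Let $V$ be an $n$-dimensional complex vector space with basis $x_i$, $i\in\mathbb{Z}_n$. For an integer $1\le k'<n$ coprime to $n$, $\tau\in\mathbb{C}\setminus\frac1n\Lambda$ and $z\in\mathbb{C}$, define $R_{n,k',\tau}(z)\in\mathrm{End}(V\otimes V)$ by $$R_{n,k',\tau}(z)(x_i\otimes x_j)=\frac{\theta_0(-z)\cdots\theta_{n-1}(-z)}{\theta_1(0)\cdots\theta_{n-1}(0)}\sum_{r\in\mathbb{Z}_n}\frac{\theta_{j-i+r(k'-1)}(-z+\tau)}{\theta_{j-i-r}(-z)\,\theta_{k'r}(\tau)}\,x_{j-r}\otimes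 x_{i+r}.$$ *)

theory Defs
  imports "HOL-Analysis.Analysis"
begin

definition ee :: "complex \<Rightarrow> complex" where
  "ee z = exp (2 * of_real pi * \<i> * z)"

definition theta :: "complex \<Rightarrow> complex \<Rightarrow> complex" where
  "theta \<eta> z = (\<Sum>\<^sub>\<infinity>m::int. (-1) powi m * ee (of_int m * z + of_int (m * (m - 1)) / 2 * \<eta>))"

definition theta_raw :: "nat \<Rightarrow> complex \<Rightarrow> int \<Rightarrow> complex \<Rightarrow> complex" where
  "theta_raw n \<eta> \<alpha> z =
     ee (of_int \<alpha> * z + of_int \<alpha> / (2 * of_nat n) + of_int (\<alpha> * (\<alpha> - int n)) / (2 * of_nat n) * \<eta>)
     * (\<Prod>m<n. theta \<eta> (z + of_nat m / of_nat n + of_int \<alpha> / of_nat n * \<eta>))"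

definition theta_idx :: "nat \<Rightarrow> complex \<Rightarrow> int \<Rightarrow> complex \<Rightarrow> complex" where
  "theta_idx n \<eta> \<alpha> z = theta_raw n \<eta> (\<alpha> mod int n) z"

text \<open>Elements of V (x) V: coefficient functions on Z_n x Z_n, represented by
  pairs of integer representatives in {0..<n}.\<close>
type_synonym vec2 = "int \<times> int \<Rightarrow> complex"

definition idx2 :: "nat \<Rightarrow> (int \<times> int) set" where
  "idx2 n = {0..<int n} \<times> {0..<int n}"

definition basis2 :: "nat \<Rightarrow> int \<Rightarrow> int \<Rightarrow> vec2" where
  "basis2 n i j = (\<lambda>p. if p = (i mod int n, j mod int n) then 1 else 0)"

definition bform :: "nat \<Rightarrow> vec2 \<Rightarrow> vec2 \<Rightarrow> complex" where
  "bform n x y = (\<Sum>p\<in>idx2 n. x p * y p)"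

definition lin_ext :: "nat \<Rightarrow> (int \<Rightarrow> int \<Rightarrow> vec2) \<Rightarrow> vec2 \<Rightarrow> vec2" where
  "lin_ext n f v = (\<lambda>q. \<Sum>p\<in>idx2 n. v p * f (fst p) (snd p) q)"

text \<open>B is the adjoint A^bullet of A: <B x, y> = <x, A y> for all x, y
  (unique, since the form is nondegenerate)\<close>
definition is_adjoint :: "nat \<Rightarrow> (vec2 \<Rightarrow> vec2) \<Rightarrow> (vec2 \<Rightarrow> vec2) \<Rightarrow> bool" where
  "is_adjoint n B A \<longleftrightarrow> (\<forall>x y. bform n (B x) y = bform n x (A y))"

text \<open>The factor
  theta_0(-z)...theta_{n-1}(-z) / theta_{j-i-r}(-z) is written with the
  cancellation performed (removable singularity), i.e. as the product of
  theta_m(-z) over m in Z_n with m different from j-i-r.\<close>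
definition R_basis :: "nat \<Rightarrow> complex \<Rightarrow> nat \<Rightarrow> complex \<Rightarrow> complex \<Rightarrow> int \<Rightarrow> int \<Rightarrow> vec2" where
  "R_basis n \<eta> k' \<tau> z i j =
     (\<lambda>q. (\<Sum>r\<in>{0..<int n}.
        ((\<Prod>m\<in>{0..<int n} - {(j - i - r) mod int n}. theta_idx n \<eta> m (-z))
          / (\<Prod>m\<in>{1..<int n}. theta_idx n \<eta> m 0))
        * theta_idx n \<eta> (j - i + r * (int k' - 1)) (-z + \<tau>)
        / theta_idx n \<eta> (int k' * r) \<tau>
        * basis2 n (j - r) (i + r) q))"

definition R_op :: "nat \<Rightarrow> complex \<Rightarrow> nat \<Rightarrow> complex \<Rightarrow> complex \<Rightarrow> vec2 \<Rightarrow> vec2" where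
  "R_op n \<eta> k' \<tau> z = lin_ext n (R_basis n \<eta> k' \<tau> z)"

end

theory Submission
  imports Defs
begin

lemma ee_add: "ee (a + b) = ee a * ee b"
  unfolding ee_def by (simp add: distrib_left exp_add)

lemma ee_nz: "ee a \<noteq> 0"
  unfolding ee_def by simp

lemma ee_zero: "ee 0 = 1"
  unfolding ee_def by simp

lemma ee_int: "ee (of_int m) = 1"
proof -
  have "2 * of_real pi * \<i> * of_int m = \<i> * (of_int m * (of_real pi * 2))" by (simp add: algebra_simps)
  then have "ee (of_int m) = exp (\<i> * (of_int m * (of_real pi * 2)))" unfolding ee_def by (simp only:)
  then show ?thesis by simp
qed

lemma ee_half: "ee (1/2) = -1"
  unfolding ee_def by simp

lemma ee_neg: "ee (- a) = inverse (ee a)"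
  unfolding ee_def by (simp add: exp_minus)

lemma ee_nat_mult: "ee (of_nat n * a) = ee a ^ n"
  unfolding ee_def by (metis exp_of_nat_mult mult.commute mult.left_commute)

lemma ee_eqI: "a = b \<Longrightarrow> ee a = ee b" by simp

lemma powi_m1: "(-1::complex) powi (m - 1) = - ((-1) powi m)"
proof -
  have "(-1::complex) powi (m - 1) * (-1) = (-1) powi m" by (rule power_int_minus_mult) simp
  then show ?thesis by (metis minus_minus mult_minus1_right)
qed

lemma powi_sq: "(-1::complex) powi m * (-1) powi m = 1"
  by (metis power_int_mult_distrib mult_minus1_right minus_minus power_int_1_left)

lemma powi_1m: "(-1::complex) powi (1 - m) = - ((-1) powi m)"
proof -
  have "(-1::complex) powi (1 - m) = inverse ((-1) powi (m - 1))"
    by (metis minus_diff_eq power_int_minus)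
  also have "\<dots> = inverse (- ((-1) powi m))" by (simp add: powi_m1)
  also have "\<dots> = - ((-1) powi m)" using powi_sq[of m]
    by (metis inverse_minus_eq inverse_unique)
  finally show ?thesis .
qed

lemma theta_neg: "theta \<eta> (- z) = - ee (- z) * theta \<eta> z"
proof -
  have bij: "bij_betw (\<lambda>m::int. 1 - m) UNIV UNIV"
    by (rule bij_betwI[where g="\<lambda>m. 1 - m"]) auto
  have "theta \<eta> (-z) = (\<Sum>\<^sub>\<infinity>m::int. (-1) powi (1-m) * ee (of_int (1-m) * (-z) + of_int ((1-m) * ((1-m) - 1)) / 2 * \<eta>))"
    unfolding theta_def by (rule infsum_reindex_bij_betw[OF bij, symmetric])
  also have "\<dots> = (\<Sum>\<^sub>\<infinity>m::int. (- ee (- z)) * ((-1) powi m * ee (of_int m * z + of_int (m * (m - 1)) / 2 * \<eta>)))"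
  proof (rule infsum_cong)
    fix m :: int
    have "of_int (1-m) * (-z) + of_int ((1-m) * ((1-m) - 1)) / 2 * \<eta> = - z + (of_int m * z + of_int (m * (m - 1)) / 2 * \<eta>)"
      by (simp add: algebra_simps)
    then have e: "ee (of_int (1-m) * (-z) + of_int ((1-m) * ((1-m) - 1)) / 2 * \<eta>) = ee (-z) * ee (of_int m * z + of_int (m * (m - 1)) / 2 * \<eta>)"
      by (simp only: ee_add)
    show "(-1) powi (1-m) * ee (of_int (1-m) * (-z) + of_int ((1-m) * ((1-m) - 1)) / 2 * \<eta>) = (- ee (- z)) * ((-1) powi m * ee (of_int m * z + of_int (m * (m - 1)) / 2 * \<eta>))"
      unfolding e powi_1m by (simp add: algebra_simps)
  qed
  also have "\<dots> = - ee (- z) * theta \<eta> z"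
    unfolding theta_def by (rule infsum_cmult_right')
  finally show ?thesis .
qed

lemma theta_shift: "theta \<eta> (z + \<eta>) = - ee (- z) * theta \<eta> z"
proof -
  have bij: "bij_betw (\<lambda>m::int. m - 1) UNIV UNIV"
    by (rule bij_betwI[where g="\<lambda>m. m + 1"]) auto
  have "theta \<eta> (z + \<eta>) = (\<Sum>\<^sub>\<infinity>m::int. (-1) powi (m-1) * ee (of_int (m-1) * (z + \<eta>) + of_int ((m-1) * ((m-1) - 1)) / 2 * \<eta>))"
    unfolding theta_def by (rule infsum_reindex_bij_betw[OF bij, symmetric])
  also have "\<dots> = (\<Sum>\<^sub>\<infinity>m::int. (- ee (- z)) * ((-1) powi m * ee (of_int m * z + of_int (m * (m - 1)) / 2 * \<eta>)))"
  proof (rule infsum_cong)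
    fix m :: int
    have "of_int (m-1) * (z + \<eta>) + of_int ((m-1) * ((m-1) - 1)) / 2 * \<eta> = - z + (of_int m * z + of_int (m * (m - 1)) / 2 * \<eta>)"
      by (simp add: algebra_simps add_divide_distrib diff_divide_distrib)
    then have e: "ee (of_int (m-1) * (z + \<eta>) + of_int ((m-1) * ((m-1) - 1)) / 2 * \<eta>) = ee (-z) * ee (of_int m * z + of_int (m * (m - 1)) / 2 * \<eta>)"
      by (simp only: ee_add)
    show "(-1) powi (m-1) * ee (of_int (m-1) * (z + \<eta>) + of_int ((m-1) * ((m-1) - 1)) / 2 * \<eta>) = (- ee (- z)) * ((-1) powi m * ee (of_int m * z + of_int (m * (m - 1)) / 2 * \<eta>))"
      unfolding e powi_m1 by (simp add: algebra_simps)
  qed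
  also have "\<dots> = - ee (- z) * theta \<eta> z"
    unfolding theta_def by (rule infsum_cmult_right')
  finally show ?thesis .
qed

lemma theta_one: "theta \<eta> (z + 1) = theta \<eta> z"
  unfolding theta_def
proof (rule infsum_cong)
  fix m :: int
  have "of_int m * (z + 1) + of_int (m * (m - 1)) / 2 * \<eta> = of_int m + (of_int m * z + of_int (m * (m - 1)) / 2 * \<eta>)"
    by (simp add: algebra_simps)
  then show "(-1) powi m * ee (of_int m * (z + 1) + of_int (m * (m - 1)) / 2 * \<eta>) = (-1) powi m * ee (of_int m * z + of_int (m * (m - 1)) / 2 * \<eta>)"
    by (simp add: ee_add ee_int)
qed

lemma ee_sum: "finite A \<Longrightarrow> ee (sum f A) = (\<Prod>x\<in>A. ee (f x))"
  by (induction A rule: finite_induct) (auto simp: ee_zero ee_add)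

lemma sum_nat_c: "2 * (\<Sum>m<n. (of_nat m::complex)) = of_nat n * (of_nat n - 1)"
  by (induction n) (auto simp: algebra_simps)

lemma prod_ee: assumes "n > 0"
  shows "(\<Prod>m<n. ee (of_nat m / of_nat n)) = (-1) ^ (n - 1)"
proof -
  have "(\<Sum>m<n. (of_nat m::complex) / of_nat n) = (\<Sum>m<n. (of_nat m::complex)) / of_nat n"
    by (simp add: sum_divide_distrib)
  also have "\<dots> = of_nat (n - 1) * (1/2)"
    using sum_nat_c[of n] assms by (simp add: field_simps of_nat_diff)
  finally have s: "(\<Sum>m<n. (of_nat m::complex) / of_nat n) = of_nat (n - 1) * (1/2)" .
  have "(\<Prod>m<n. ee (of_nat m / of_nat n)) = ee (\<Sum>m<n. (of_nat m::complex) / of_nat n)"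
    by (simp add: ee_sum)
  also have "\<dots> = (-1) ^ (n - 1)" unfolding s ee_nat_mult ee_half ..
  finally show ?thesis .
qed

lemma prod_ee_neg: assumes "n > 0"
  shows "(\<Prod>m<n. ee (- (of_nat m / of_nat n))) = (-1) ^ (n - 1)"
proof -
  have "(\<Prod>m<n. ee (- (of_nat m / of_nat n))) = ee (- (\<Sum>m<n. (of_nat m::complex) / of_nat n))"
    unfolding sum_negf[symmetric] by (simp add: ee_sum)
  also have "\<dots> = inverse (ee (\<Sum>m<n. (of_nat m::complex) / of_nat n))" by (rule ee_neg)
  also have "\<dots> = inverse ((-1) ^ (n - 1))" using prod_ee[OF assms] by (simp add: ee_sum)
  also have "\<dots> = (-1) ^ (n - 1)" by (metis inverse_unique minus_one_mult_self)
  finally show ?thesis .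
qed

lemma sign_n: assumes "n > 0" shows "(-1::complex) ^ n * (-1) ^ (n - 1) = -1"
proof -
  have "(-1::complex) ^ n = - ((-1) ^ (n - 1))" using assms
    by (metis Suc_diff_1 mult_minus1 power_Suc)
  then show ?thesis by simp
qed

definition PP :: "nat \<Rightarrow> complex \<Rightarrow> complex \<Rightarrow> complex" where
  "PP n \<eta> x = (\<Prod>m<n. theta \<eta> (x + of_nat m / of_nat n))"

lemma PP_shift: assumes "n > 0"
  shows "PP n \<eta> (x + \<eta>) = - ee (- (of_nat n * x)) * PP n \<eta> x"
proof -
  have "PP n \<eta> (x + \<eta>) = (\<Prod>m<n. (- ee (- x) * ee (- (of_nat m / of_nat n))) * theta \<eta> (x + of_nat m / of_nat n))"
    unfolding PP_def
  proof (rule prod.cong[OF refl])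
    fix m
    have "theta \<eta> (x + \<eta> + of_nat m / of_nat n) = theta \<eta> ((x + of_nat m / of_nat n) + \<eta>)"
      by (simp add: algebra_simps)
    also have "\<dots> = - ee (- (x + of_nat m / of_nat n)) * theta \<eta> (x + of_nat m / of_nat n)"
      by (rule theta_shift)
    also have "\<dots> = (- ee (- x) * ee (- (of_nat m / of_nat n))) * theta \<eta> (x + of_nat m / of_nat n)"
      using ee_add[of "- x" "- (of_nat m / of_nat n)"] by simp
    finally show "theta \<eta> (x + \<eta> + of_nat m / of_nat n) = (- ee (- x) * ee (- (of_nat m / of_nat n))) * theta \<eta> (x + of_nat m / of_nat n)" .
  qed
  also have "\<dots> = (- ee (- x)) ^ n * (\<Prod>m<n. ee (- (of_nat m / of_nat n))) * PP n \<eta> x"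
    unfolding PP_def prod.distrib by simp
  also have "\<dots> = ((-1) ^ n * (-1) ^ (n - 1)) * ee (- x) ^ n * PP n \<eta> x"
    unfolding prod_ee_neg[OF assms] by (subst power_minus) (simp only: mult_ac)
  also have "\<dots> = - ee (- (of_nat n * x)) * PP n \<eta> x"
    unfolding sign_n[OF assms] ee_nat_mult[symmetric] by simp
  finally show ?thesis .
qed

lemma PP_refl: assumes "n > 0"
  shows "(\<Prod>m<n. theta \<eta> (x - of_nat m / of_nat n)) = PP n \<eta> x"
  unfolding PP_def
proof (rule prod.reindex_bij_witness[where i="\<lambda>m. (n - m) mod n" and j="\<lambda>m. (n - m) mod n"])
  fix a assume a: "a \<in> {..<n}"
  show "(n - (n - a) mod n) mod n = a" using a
    by (cases "a = 0") auto
  show "(n - a) mod n \<in> {..<n}" using assms by simp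
  show "theta \<eta> (x + of_nat ((n - a) mod n) / of_nat n) = theta \<eta> (x - of_nat a / of_nat n)"
  proof (cases "a = 0")
    case True then show ?thesis by simp
  next
    case False
    then have "(n - a) mod n = n - a" using a by simp
    then have eq: "x + of_nat ((n - a) mod n) / of_nat n = (x - of_nat a / of_nat n) + 1"
      using a assms by (simp add: of_nat_diff field_simps)
    show ?thesis by (subst eq, rule theta_one)
  qed
next
  fix b assume b: "b \<in> {..<n}"
  show "(n - (n - b) mod n) mod n = b" using b
    by (cases "b = 0") auto
  show "(n - b) mod n \<in> {..<n}" using assms by simp
qed

lemma PP_neg: assumes "n > 0"
  shows "PP n \<eta> (- x) = - ee (- (of_nat n * x)) * PP n \<eta> x"
proof -
  have "PP n \<eta> (- x) = (\<Prod>m<n. (- ee (- x) * ee (of_nat m / of_nat n)) * theta \<eta> (x - of_nat m / of_nat n))"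
    unfolding PP_def
  proof (rule prod.cong[OF refl])
    fix m
    have "theta \<eta> (- x + of_nat m / of_nat n) = theta \<eta> (- (x - of_nat m / of_nat n))"
      by (simp add: algebra_simps)
    also have "\<dots> = - ee (- (x - of_nat m / of_nat n)) * theta \<eta> (x - of_nat m / of_nat n)"
      by (rule theta_neg)
    also have "\<dots> = (- ee (- x) * ee (of_nat m / of_nat n)) * theta \<eta> (x - of_nat m / of_nat n)"
      using ee_add[of "- x" "of_nat m / of_nat n"] by simp
    finally show "theta \<eta> (- x + of_nat m / of_nat n) = (- ee (- x) * ee (of_nat m / of_nat n)) * theta \<eta> (x - of_nat m / of_nat n)" .
  qed
  also have "\<dots> = (- ee (- x)) ^ n * (\<Prod>m<n. ee (of_nat m / of_nat n)) * PP n \<eta> x"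
    unfolding PP_refl[OF assms, symmetric] prod.distrib by simp
  also have "\<dots> = ((-1) ^ n * (-1) ^ (n - 1)) * ee (- x) ^ n * PP n \<eta> x"
    unfolding prod_ee[OF assms] by (subst power_minus) (simp only: mult_ac)
  also have "\<dots> = - ee (- (of_nat n * x)) * PP n \<eta> x"
    unfolding sign_n[OF assms] ee_nat_mult[symmetric] by simp
  finally show ?thesis .
qed

definition pref :: "nat \<Rightarrow> complex \<Rightarrow> int \<Rightarrow> complex \<Rightarrow> complex" where
  "pref n \<eta> \<alpha> z = of_int \<alpha> * z + of_int \<alpha> / (2 * of_nat n) + of_int (\<alpha> * (\<alpha> - int n)) / (2 * of_nat n) * \<eta>"

lemma theta_raw_P: "theta_raw n \<eta> \<alpha> z = ee (pref n \<eta> \<alpha> z) * PP n \<eta> (z + of_int \<alpha> / of_nat n * \<eta>)"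
  unfolding theta_raw_def PP_def pref_def by (simp add: add_ac)

lemma raw_shift: assumes "n > 0"
  shows "theta_raw n \<eta> (\<alpha> + int n) w = theta_raw n \<eta> \<alpha> w"
proof -
  have a1: "w + of_int (\<alpha> + int n) / of_nat n * \<eta> = (w + of_int \<alpha> / of_nat n * \<eta>) + \<eta>"
    using assms by (simp add: field_simps)
  have a2: "pref n \<eta> (\<alpha> + int n) w + - (of_nat n * (w + of_int \<alpha> / of_nat n * \<eta>)) = pref n \<eta> \<alpha> w + 1/2"
    using assms unfolding pref_def by (simp add: field_simps)
  have "ee (pref n \<eta> (\<alpha> + int n) w) * ee (- (of_nat n * (w + of_int \<alpha> / of_nat n * \<eta>))) = - ee (pref n \<eta> \<alpha> w)"
    unfolding ee_add[symmetric] a2 by (simp add: ee_add ee_half)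
  then show ?thesis
    unfolding theta_raw_P a1 PP_shift[OF assms]
    by (metis (no_types, lifting) minus_mult_minus mult.assoc mult_minus_left)
qed

lemma raw_neg: assumes "n > 0"
  shows "theta_raw n \<eta> (- \<alpha>) (- w) = - ee (- (of_int \<alpha> / of_nat n)) * ee (- (of_nat n * w)) * theta_raw n \<eta> \<alpha> w"
proof -
  have a1: "- w + of_int (- \<alpha>) / of_nat n * \<eta> = - (w + of_int \<alpha> / of_nat n * \<eta>)"
    by (simp add: field_simps)
  have a2: "pref n \<eta> (- \<alpha>) (- w) + - (of_nat n * (w + of_int \<alpha> / of_nat n * \<eta>)) = - (of_int \<alpha> / of_nat n) + - (of_nat n * w) + pref n \<eta> \<alpha> w"
    using assms unfolding pref_def by (simp add: field_simps)
  have "ee (pref n \<eta> (- \<alpha>) (- w)) * ee (- (of_nat n * (w + of_int \<alpha> / of_nat n * \<eta>))) = ee (- (of_int \<alpha> / of_nat n)) * ee (- (of_nat n * w)) * ee (pref n \<eta> \<alpha> w)"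
    unfolding ee_add[symmetric] a2 ..
  then show ?thesis
    unfolding theta_raw_P a1 PP_neg[OF assms]
    by (metis (no_types, lifting) minus_mult_minus mult.assoc mult_minus_left)
qed

lemma raw_shift_nat: assumes "n > 0"
  shows "theta_raw n \<eta> (\<beta> + int n * int q) w = theta_raw n \<eta> \<beta> w"
proof (induction q)
  case 0 then show ?case by simp
next
  case (Suc q)
  have eq: "\<beta> + int n * int (Suc q) = (\<beta> + int n * int q) + int n" by (simp add: algebra_simps)
  show ?case by (subst eq, subst raw_shift[OF assms], rule Suc.IH)
qed

lemma raw_shift_int: assumes "n > 0"
  shows "theta_raw n \<eta> (\<beta> + int n * q) w = theta_raw n \<eta> \<beta> w"
proof (cases "q \<ge> 0")
  case True
  then obtain p where "q = int p" by (metis nonneg_eq_int)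
  then show ?thesis using raw_shift_nat[OF assms] by simp
next
  case False
  then obtain p where p: "q = - int p" by (metis linorder_not_le less_imp_le neg_int_cases order_refl)
  have "theta_raw n \<eta> \<beta> w = theta_raw n \<eta> ((\<beta> + int n * q) + int n * int p) w"
    using p by simp
  also have "\<dots> = theta_raw n \<eta> (\<beta> + int n * q) w" by (rule raw_shift_nat[OF assms])
  finally show ?thesis by simp
qed

lemma idx_raw: assumes "n > 0"
  shows "theta_idx n \<eta> \<alpha> w = theta_raw n \<eta> \<alpha> w"
proof -
  have "\<alpha> = \<alpha> mod int n + int n * (\<alpha> div int n)" by simp
  then have "theta_raw n \<eta> \<alpha> w = theta_raw n \<eta> (\<alpha> mod int n + int n * (\<alpha> div int n)) w" by simp
  also have "\<dots> = theta_raw n \<eta> (\<alpha> mod int n) w" by (rule raw_shift_int[OF assms])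
  finally show ?thesis unfolding theta_idx_def by simp
qed

lemma idx_neg: assumes "n > 0"
  shows "theta_idx n \<eta> (- \<alpha>) (- w) = - ee (- (of_int \<alpha> / of_nat n)) * ee (- (of_nat n * w)) * theta_idx n \<eta> \<alpha> w"
  unfolding idx_raw[OF assms] by (rule raw_neg[OF assms])

lemma idx_cong: "x mod int n = y mod int n \<Longrightarrow> theta_idx n \<eta> x w = theta_idx n \<eta> y w"
  unfolding theta_idx_def by simp

lemma prod_int_nat: "(\<Prod>m\<in>{0..<int n}. f m) = (\<Prod>m<n. f (int m))"
proof (rule prod.reindex_bij_witness[where i=int and j=nat])
  fix a assume "a \<in> {0..<int n}" then show "int (nat a) = a" "nat a \<in> {..<n}" "f (int (nat a)) = f a" by auto
next
  fix b assume "b \<in> {..<n}" then show "nat (int b) = b" "int b \<in> {0..<int n}" by auto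
qed

lemma ee_inv_pair: "ee (- a) * ee a = 1"
  using ee_add[of "-a" a] by (simp add: ee_zero)

lemma mod_neg_iff: "((- x) mod (m::int) = (- y) mod m) = (x mod m = y mod m)"
  by (metis mod_minus_eq minus_minus)

lemma ee_mod: assumes "n > 0"
  shows "ee (of_int (\<beta> mod int n) / of_nat n) * ee (- (of_int \<beta> / of_nat n)) = 1"
proof -
  have "\<beta> mod int n = \<beta> - int n * (\<beta> div int n)" by (simp add: minus_div_mult_eq_mod[symmetric] mult.commute)
  then have "(of_int (\<beta> mod int n) :: complex) = of_int \<beta> - of_nat n * of_int (\<beta> div int n)" by simp
  then have "of_int (\<beta> mod int n) / of_nat n + - (of_int \<beta> / of_nat n) = (of_int (- (\<beta> div int n)) :: complex)"
    using assms by (simp add: field_simps)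
  then show ?thesis by (metis ee_add ee_int)
qed

lemma prod_excl: assumes "n > 0"
  shows "(\<Prod>m\<in>{0..<int n} - {\<beta> mod int n}. theta_idx n \<eta> m (- w))
    = ee (- (of_nat n * of_nat n * w)) * ee (- (of_int \<beta> / of_nat n)) * ee (of_nat n * w)
      * (\<Prod>m\<in>{0..<int n} - {(- \<beta>) mod int n}. theta_idx n \<eta> m w)"
proof -
  define g where "g m = - ee (of_int m / of_nat n) * ee (- (of_nat n * w))" for m :: int
  define S where "S = {0..<int n}"
  have step1: "theta_idx n \<eta> m (- w) = g m * theta_idx n \<eta> (- m) w" for m
    using idx_neg[OF assms, of \<eta> "- m" w] unfolding g_def by simp
  have step2: "(\<Prod>m\<in>S - {\<beta> mod int n}. theta_idx n \<eta> (- m) w) = (\<Prod>m\<in>S - {(- \<beta>) mod int n}. theta_idx n \<eta> m w)"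
  proof (rule prod.reindex_bij_witness[where i="\<lambda>m. (- m) mod int n" and j="\<lambda>m. (- m) mod int n"])
    fix a assume a: "a \<in> S - {\<beta> mod int n}"
    then show "(- ((- a) mod int n)) mod int n = a" unfolding S_def by (simp add: mod_minus_eq)
    show "(- a) mod int n \<in> S - {(- \<beta>) mod int n}"
      using a assms unfolding S_def by (auto simp: mod_neg_iff)
    show "theta_idx n \<eta> ((- a) mod int n) w = theta_idx n \<eta> (- a) w"
      by (rule idx_cong) simp
  next
    fix b assume b: "b \<in> S - {(- \<beta>) mod int n}"
    then show "(- ((- b) mod int n)) mod int n = b" unfolding S_def by (simp add: mod_minus_eq)
    show "(- b) mod int n \<in> S - {\<beta> mod int n}"
      using b assms unfolding S_def by (auto simp: mod_neg_iff[symmetric])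
  qed
  have gS: "(\<Prod>m\<in>S. g m) = - ee (- (of_nat n * of_nat n * w))"
  proof -
    have "(\<Prod>m\<in>S. g m) = (\<Prod>m<n. (- ee (- (of_nat n * w))) * ee (of_nat m / of_nat n))"
      unfolding S_def prod_int_nat g_def by (simp add: mult.commute)
    also have "\<dots> = (- ee (- (of_nat n * w))) ^ n * (-1) ^ (n - 1)"
      unfolding prod.distrib prod_ee[OF assms] by simp
    also have "\<dots> = ((-1) ^ n * (-1) ^ (n - 1)) * ee (- (of_nat n * w)) ^ n"
      by (subst power_minus) (simp only: mult_ac)
    also have "\<dots> = - ee (- (of_nat n * of_nat n * w))"
      unfolding sign_n[OF assms] ee_nat_mult[symmetric] by (simp add: mult.assoc)
    finally show ?thesis .
  qed
  have bS: "\<beta> mod int n \<in> S" unfolding S_def using assms by simp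
  have gb: "g (\<beta> mod int n) * (ee (- (of_nat n * of_nat n * w)) * ee (- (of_int \<beta> / of_nat n)) * ee (of_nat n * w))
      = - ee (- (of_nat n * of_nat n * w))"
  proof -
    have "g (\<beta> mod int n) * (ee (- (of_nat n * of_nat n * w)) * ee (- (of_int \<beta> / of_nat n)) * ee (of_nat n * w))
      = - ee (- (of_nat n * of_nat n * w)) * (ee (of_int (\<beta> mod int n) / of_nat n) * ee (- (of_int \<beta> / of_nat n)))
          * (ee (- (of_nat n * w)) * ee (of_nat n * w))"
      unfolding g_def by (simp only: mult_ac mult_minus_left mult_minus_right)
    then show ?thesis unfolding ee_mod[OF assms] ee_inv_pair by simp
  qed
  have gS2: "(\<Prod>m\<in>S - {\<beta> mod int n}. g m) = ee (- (of_nat n * of_nat n * w)) * ee (- (of_int \<beta> / of_nat n)) * ee (of_nat n * w)"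
  proof -
    have "g (\<beta> mod int n) * (\<Prod>m\<in>S - {\<beta> mod int n}. g m) = g (\<beta> mod int n) * (ee (- (of_nat n * of_nat n * w)) * ee (- (of_int \<beta> / of_nat n)) * ee (of_nat n * w))"
    proof -
      have "g (\<beta> mod int n) * (\<Prod>m\<in>S - {\<beta> mod int n}. g m) = (\<Prod>m\<in>S. g m)"
        by (rule prod.remove[symmetric]) (use bS in \<open>auto simp: S_def\<close>)
      then show ?thesis unfolding gS gb .
    qed
    moreover have "g (\<beta> mod int n) \<noteq> 0" unfolding g_def by (simp add: ee_nz)
    ultimately show ?thesis by simp
  qed
  show ?thesis
    unfolding S_def[symmetric] step1 prod.distrib step2 gS2 ..
qed

definition coef :: "nat \<Rightarrow> complex \<Rightarrow> nat \<Rightarrow> complex \<Rightarrow> complex \<Rightarrow> int \<Rightarrow> int \<Rightarrow> int \<Rightarrow> complex" where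
  "coef n \<eta> k' \<tau> z i j r =
     ((\<Prod>m\<in>{0..<int n} - {(j - i - r) mod int n}. theta_idx n \<eta> m (-z))
          / (\<Prod>m\<in>{1..<int n}. theta_idx n \<eta> m 0))
        * theta_idx n \<eta> (j - i + r * (int k' - 1)) (-z + \<tau>)
        / theta_idx n \<eta> (int k' * r) \<tau>"

lemma R_basis_coef: "R_basis n \<eta> k' \<tau> z i j q = (\<Sum>r\<in>{0..<int n}. coef n \<eta> k' \<tau> z i j r * basis2 n (j - r) (i + r) q)"
  unfolding R_basis_def coef_def ..

lemma mod_shift: "x = y + int n * q \<Longrightarrow> x mod int n = y mod int n" by simp

lemma coef_eq: assumes "n > 0" and "k < n"
    and a: "a = j - r - int n * ((j - r) div int n)" and b: "b = i + r - int n * ((i + r) div int n)"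
  shows "ee (- (of_nat n ^ 2) * z) * coef n \<eta> (n - k) (- \<tau>) (- z) a b r = coef n \<eta> k \<tau> z i j r"
proof -
  define T where "T = theta_idx n \<eta>"
  define D where "D = (\<Prod>m\<in>{1..<int n}. theta_idx n \<eta> m 0)"
  define \<beta> where "\<beta> = j - i - r"
  define s where "s = j - i + r * (int k - 1)"
  define P' where "P' = (\<Prod>m\<in>{0..<int n} - {(- \<beta>) mod int n}. T m z)"
  define A where "A = T (- s) (z - \<tau>)"
  define B where "B = T (- (int k * r)) (- \<tau>)"
  define E where "E = ee (- (of_nat n ^ 2) * z)"
  have kk: "int (n - k) = int n - int k" using assms by simp
  have e1: "(b - a - r) mod int n = (- \<beta>) mod int n"
    by (rule mod_shift[where q="(j - r) div int n - (i + r) div int n"]) (simp add: a b \<beta>_def algebra_simps)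
  have zz: "- (- z) + - \<tau> = z - \<tau>" by simp
  have e2: "T (b - a + r * (int (n - k) - 1)) (- (- z) + - \<tau>) = A"
    unfolding A_def T_def kk zz
    by (rule idx_cong, rule mod_shift[where q="(j - r) div int n - (i + r) div int n + r"]) (simp add: a b s_def algebra_simps)
  have e3: "T (int (n - k) * r) (- \<tau>) = B"
    unfolding B_def T_def kk
    by (rule idx_cong, rule mod_shift[where q="r"]) (simp add: algebra_simps)
  have L: "ee (- (of_nat n ^ 2) * z) * coef n \<eta> (n - k) (- \<tau>) (- z) a b r = E * (P' / D * A / B)"
    unfolding coef_def e1 E_def P'_def D_def T_def[symmetric] e2 e3 by simp
  have r1: "(\<Prod>m\<in>{0..<int n} - {(j - i - r) mod int n}. T m (- z))
      = ee (- (of_nat n * of_nat n * z)) * ee (- (of_int \<beta> / of_nat n)) * ee (of_nat n * z) * P'"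
    unfolding T_def P'_def \<beta>_def by (rule prod_excl[OF assms(1)])
  have r2: "T s (- z + \<tau>) = - ee (of_int s / of_nat n) * ee (- (of_nat n * (z - \<tau>))) * A"
    using idx_neg[OF assms(1), of \<eta> "- s" "z - \<tau>"] unfolding A_def T_def by simp
  have r3: "T (int k * r) \<tau> = - ee (of_int (int k * r) / of_nat n) * ee (of_nat n * \<tau>) * B"
    using idx_neg[OF assms(1), of \<eta> "- (int k * r)" "- \<tau>"] unfolding B_def T_def by simp
  have R: "coef n \<eta> k \<tau> z i j r = (ee (- (of_nat n * of_nat n * z)) * ee (- (of_int \<beta> / of_nat n)) * ee (of_nat n * z) * P') / D
       * (- ee (of_int s / of_nat n) * ee (- (of_nat n * (z - \<tau>))) * A)
       / (- ee (of_int (int k * r) / of_nat n) * ee (of_nat n * \<tau>) * B)"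
    unfolding coef_def unfolding D_def[symmetric] unfolding T_def[symmetric] r1 s_def[symmetric] r2 r3 ..
  have key: "ee (- (of_int \<beta> / of_nat n)) * ee (of_nat n * z) * ee (of_int s / of_nat n) * ee (- (of_nat n * (z - \<tau>)))
      = ee (of_int (int k * r) / of_nat n) * ee (of_nat n * \<tau>)"
  proof -
    have "- (of_int \<beta> / of_nat n) + of_nat n * z + of_int s / of_nat n + - (of_nat n * (z - \<tau>))
       = of_int (int k * r) / of_nat n + (of_nat n * \<tau> :: complex)"
      using assms(1) unfolding \<beta>_def s_def by (simp add: field_simps)
    then show ?thesis by (metis ee_add)
  qed
  have EE: "ee (- (of_nat n * of_nat n * z)) = E" unfolding E_def by (simp add: power2_eq_square)
  show ?thesis
  proof (cases "B = 0")
    case True then show ?thesis unfolding L R by simp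
  next
    case False
    have nz: "ee (of_int (int k * r) / of_nat n) * ee (of_nat n * \<tau>) \<noteq> 0" by (simp add: ee_nz)
    show ?thesis unfolding L R EE using False nz key
      by (simp add: field_simps)
  qed
qed

lemma hx: "0 \<le> x \<Longrightarrow> x < int n \<Longrightarrow> (x = y mod int n) = (int n dvd x - y)"
  by (metis mod_eq_dvd_iff mod_pos_pos_trivial)

lemma cond_iff: assumes "0 \<le> i" "i < int n" "0 \<le> j" "j < int n" "0 \<le> a" "a < int n" "0 \<le> b" "b < int n"
  shows "((i, j) = ((b - r) mod int n, (a + r) mod int n)) = ((a, b) = ((j - r) mod int n, (i + r) mod int n))"
proof -
  have 1: "i - (b - r) = - (b - (i + r))" "j - (a + r) = - (a - (j - r))" by simp_all
  show ?thesis using assms by (simp add: hx 1 dvd_minus_iff del: minus_diff_eq) blast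
qed

lemma entry: assumes "n > 0" and "k < n"
    and ij: "(i, j) \<in> idx2 n" and ab: "(a, b) \<in> idx2 n"
  shows "ee (- (of_nat n ^ 2) * z) * (coef n \<eta> (n - k) (- \<tau>) (- z) a b r * basis2 n (b - r) (a + r) (i, j))
     = coef n \<eta> k \<tau> z i j r * basis2 n (j - r) (i + r) (a, b)"
proof (cases "(a, b) = ((j - r) mod int n, (i + r) mod int n)")
  case True
  then have c1: "(i, j) = ((b - r) mod int n, (a + r) mod int n)"
    using cond_iff[of i n j a b r] ij ab unfolding idx2_def by auto
  have a: "a = j - r - int n * ((j - r) div int n)" and b: "b = i + r - int n * ((i + r) div int n)"
    using True by (simp_all add: minus_div_mult_eq_mod[symmetric] mult.commute)
  show ?thesis using True c1 coef_eq[OF assms(1,2) a b] unfolding basis2_def by simp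
next
  case False
  then have c1: "(i, j) \<noteq> ((b - r) mod int n, (a + r) mod int n)"
    using cond_iff[of i n j a b r] ij ab unfolding idx2_def by auto
  have z1: "basis2 n (b - r) (a + r) (i, j) = 0" unfolding basis2_def using c1 by (rule if_not_P)
  have z2: "basis2 n (j - r) (i + r) (a, b) = 0" unfolding basis2_def using False by (rule if_not_P)
  show ?thesis unfolding z1 z2 by simp
qed

lemma matrix_entry: assumes "n > 0" and "k < n"
    and ij: "(i, j) \<in> idx2 n" and ab: "(a, b) \<in> idx2 n"
  shows "ee (- (of_nat n ^ 2) * z) * R_basis n \<eta> (n - k) (- \<tau>) (- z) a b (i, j) = R_basis n \<eta> k \<tau> z i j (a, b)"
  unfolding R_basis_coef sum_distrib_left
  by (rule sum.cong[OF refl], rule entry[OF assms])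

theorem lemma7p3:
  fixes n k :: nat and \<eta> \<tau> z :: complex
  assumes "1 \<le> k" and "k < n" and "coprime n k"
    and "Im \<eta> > 0"
    and "\<not> (\<exists>a b :: int. \<tau> = (of_int a + of_int b * \<eta>) / of_nat n)"
  shows "is_adjoint n
           (\<lambda>v. (\<lambda>q. ee (- (of_nat n ^ 2) * z) * R_op n \<eta> (n - k) (- \<tau>) (- z) v q))
           (R_op n \<eta> k \<tau> z)"
  unfolding is_adjoint_def
proof (intro allI)
  fix x y :: vec2
  have n0: "n > 0" using assms by simp
  define E where "E = ee (- (of_nat n ^ 2) * z)"
  have me: "E * R_basis n \<eta> (n - k) (- \<tau>) (- z) (fst p) (snd p) q = R_basis n \<eta> k \<tau> z (fst q) (snd q) p"
    if "p \<in> idx2 n" "q \<in> idx2 n" for p q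
    using matrix_entry[OF n0 assms(2), of "fst q" "snd q" "fst p" "snd p" z \<eta> \<tau>] that unfolding E_def by simp
  have "bform n (\<lambda>q. E * R_op n \<eta> (n - k) (- \<tau>) (- z) x q) y
      = (\<Sum>q\<in>idx2 n. \<Sum>p\<in>idx2 n. x p * y q * (E * R_basis n \<eta> (n - k) (- \<tau>) (- z) (fst p) (snd p) q))"
    unfolding bform_def R_op_def lin_ext_def sum_distrib_left sum_distrib_right
    by (rule sum.cong[OF refl], rule sum.cong[OF refl]) (simp add: mult_ac)
  also have "\<dots> = (\<Sum>q\<in>idx2 n. \<Sum>p\<in>idx2 n. x p * y q * R_basis n \<eta> k \<tau> z (fst q) (snd q) p)"
    by (rule sum.cong[OF refl], rule sum.cong[OF refl]) (simp add: me)
  also have "\<dots> = (\<Sum>p\<in>idx2 n. \<Sum>q\<in>idx2 n. x p * y q * R_basis n \<eta> k \<tau> z (fst q) (snd q) p)"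
    by (rule sum.swap)
  also have "\<dots> = bform n x (R_op n \<eta> k \<tau> z y)"
    unfolding bform_def R_op_def lin_ext_def sum_distrib_left
    by (rule sum.cong[OF refl], rule sum.cong[OF refl]) (simp add: mult_ac)
  finally show "bform n (\<lambda>q. ee (- (of_nat n ^ 2) * z) * R_op n \<eta> (n - k) (- \<tau>) (- z) x q) y = bform n x (R_op n \<eta> k \<tau> z y)"
    unfolding E_def .
qed

end
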